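(* Let $I$ be a binary, friendship-uniform instance with common friendship value $\phi<1$ whose friendship graph $(N,F^* )$ has maximum degree $1$, and let $A$ be the (random) allocation output by FF-CT-RSD$^*$ on $I$ when all agents report their friendships truthfully and choose plots to maximize their utility. Then $\mathbb E(\mathrm{SW}(A))\ge\frac{\phi}{4\phi+4}\,\mathrm{OPT}(I)$.
   Context: Instance: agents $N$, $n=|N|$ plots $\mathcal V$, undirected plot graph $(\mathcal V,\mathcal E)$, binary valuations $u_i:\mathcal V\to\{0,1\}$, reciprocal friendship relation $F$ with $\phi_{i,j}=\phi>0$ for all $(i,j)\in F$; $F^*=\{\{i,j\}:(i,j)\in F\}$. For a bijection $A:N\to\mathcal V$, $U_i(A)=u_i(A(i))+\sum_{(i,j)\in F}\phi\,\mathbb I(\{A(i),A(j)\}\in\mathcal E)$, $\mathrm{SW}(A)=\sum_iU_i(A)$, $\mathrm{OPT}(I)=\max_A\mathrm{SW}(A)$. RSD$^*$: in each iteration, remaining agents report whether they value some available plot positively; if some do, one of them chosen uniformly at random picks a plot; otherwise remaining agents are arbitrarily paired with remaining plots and the procedure stops. FF-CT-RSD$^*$: each agent reports a friend (or none); let $P$ be the set of pairs $\{i,j\}$ who report each other. While some pair of adjacent plots is unoccupied and $P\ne\emptyset$, a uniformly random pair $\{i,j\}$ is removed from $P$ and $i,j$ pick plots consecutively in random order. Afterwards RSD$^*$ is run on the remaining agents and plots. Expectation is over the mechanism's randomness. *)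

theory Defs
  imports "HOL-Probability.Probability"
begin

text \<open>Instance: agents N, plots V (finite, card N = card V), plot graph given by a set E of
  two-element edges {x,y}, binary valuations u (u i v = True means value 1), friendship
  relation F with common value phi.\<close>

definition utility ::
  "('a \<Rightarrow> 'v \<Rightarrow> bool) \<Rightarrow> ('a \<times> 'a) set \<Rightarrow> 'v set set \<Rightarrow> real \<Rightarrow> ('a \<Rightarrow> 'v) \<Rightarrow> 'a \<Rightarrow> real" where
  "utility u F E \<phi> A i =
     of_bool (u i (A i)) + (\<Sum>j\<in>{j. (i, j) \<in> F}. \<phi> * of_bool ({A i, A j} \<in> E))"

definition SW ::
  "'a set \<Rightarrow> 'v set set \<Rightarrow> ('a \<Rightarrow> 'v \<Rightarrow> bool) \<Rightarrow> ('a \<times> 'a) set \<Rightarrow> real \<Rightarrow> ('a \<Rightarrow> 'v) \<Rightarrow> real" where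
  "SW N E u F \<phi> A = (\<Sum>i\<in>N. utility u F E \<phi> A i)"

definition OPT ::
  "'a set \<Rightarrow> 'v set \<Rightarrow> 'v set set \<Rightarrow> ('a \<Rightarrow> 'v \<Rightarrow> bool) \<Rightarrow> ('a \<times> 'a) set \<Rightarrow> real \<Rightarrow> real" where
  "OPT N V E u F \<phi> = Max (SW N E u F \<phi> ` {A. bij_betw A N V})"

text \<open>F* : the unordered friend pairs; with truthful reports these are exactly the mutually
  reporting pairs P.\<close>
definition friend_pairs :: "('a \<times> 'a) set \<Rightarrow> 'a set set" where
  "friend_pairs F = {{i, j} | i j. (i, j) \<in> F}"

text \<open>Second agent j of a pair, after its friend took plot v, picks w from the free set S
  maximizing its utility u_j(w) + phi * [w adjacent to v].\<close>
definition second_val ::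
  "('a \<Rightarrow> 'v \<Rightarrow> bool) \<Rightarrow> 'v set set \<Rightarrow> real \<Rightarrow> 'a \<Rightarrow> 'v \<Rightarrow> 'v \<Rightarrow> real" where
  "second_val u E \<phi> j v w = of_bool (u j w) + \<phi> * of_bool ({v, w} \<in> E)"

definition best_resp ::
  "('a \<Rightarrow> 'v \<Rightarrow> bool) \<Rightarrow> 'v set set \<Rightarrow> real \<Rightarrow> 'a \<Rightarrow> 'v \<Rightarrow> 'v set \<Rightarrow> 'v set" where
  "best_resp u E \<phi> j v S = {w \<in> S. \<forall>w'\<in>S. second_val u E \<phi> j v w' \<le> second_val u E \<phi> j v w}"

text \<open>First agent i of a pair (friend j) evaluates plot v from the free set S by the utility it
  obtains given that j then best-responds (for binary u and 0 < phi < 1, whether j's best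
  response is adjacent to v does not depend on tie-breaking).\<close>
definition first_val ::
  "('a \<Rightarrow> 'v \<Rightarrow> bool) \<Rightarrow> 'v set set \<Rightarrow> real \<Rightarrow> 'a \<Rightarrow> 'a \<Rightarrow> 'v \<Rightarrow> 'v set \<Rightarrow> real" where
  "first_val u E \<phi> i j v S =
     of_bool (u i v) + \<phi> * of_bool (\<forall>w\<in>best_resp u E \<phi> j v (S - {v}). {v, w} \<in> E)"

text \<open>RSD* on the remaining agents (N - dom pl) and plots (V - ran pl).
  rsd_out N V u pl p: p is a possible output distribution, for some resolution of the
  arbitrary choices (tie-breaking among utility-maximizing plots, final arbitrary pairing).\<close>
inductive rsd_out ::
  "'a set \<Rightarrow> 'v set \<Rightarrow> ('a \<Rightarrow> 'v \<Rightarrow> bool) \<Rightarrow> ('a \<rightharpoonup> 'v) \<Rightarrow> ('a \<Rightarrow> 'v) pmf \<Rightarrow> bool"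
  for N V u where
  rsd_pick:
    "{i \<in> N - dom pl. \<exists>v\<in>V - ran pl. u i v} \<noteq> {} \<Longrightarrow>
     (\<forall>i. i \<in> {i \<in> N - dom pl. \<exists>v\<in>V - ran pl. u i v} \<longrightarrow>
        (\<exists>v. v \<in> V - ran pl \<and> u i v \<and> rsd_out N V u (pl(i \<mapsto> v)) (Q i))) \<Longrightarrow>
     rsd_out N V u pl (bind_pmf (pmf_of_set {i \<in> N - dom pl. \<exists>v\<in>V - ran pl. u i v}) Q)"
| rsd_stop:
    "{i \<in> N - dom pl. \<exists>v\<in>V - ran pl. u i v} = {} \<Longrightarrow> bij_betw A N V \<Longrightarrow>
     (\<forall>i\<in>dom pl. pl i = Some (A i)) \<Longrightarrow> rsd_out N V u pl (return_pmf A)"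

text \<open>FF-CT-RSD*: state = partial allocation pl and remaining reported pairs P.
  A uniformly random ordered pair (i,j) with {i,j} in P (= uniform pair, uniform order) is
  drawn; i picks a free plot maximizing first_val, then j picks a best response.\<close>
inductive ff_out ::
  "'a set \<Rightarrow> 'v set \<Rightarrow> 'v set set \<Rightarrow> ('a \<Rightarrow> 'v \<Rightarrow> bool) \<Rightarrow> real \<Rightarrow>
   ('a \<rightharpoonup> 'v) \<Rightarrow> 'a set set \<Rightarrow> ('a \<Rightarrow> 'v) pmf \<Rightarrow> bool"
  for N V E u \<phi> where
  ff_pair:
    "P \<noteq> {} \<Longrightarrow> (\<exists>x y. {x, y} \<in> E \<and> x \<in> V - ran pl \<and> y \<in> V - ran pl) \<Longrightarrow>
     (\<forall>i j. {i, j} \<in> P \<longrightarrow>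
        (\<exists>v w. v \<in> V - ran pl \<and>
           (\<forall>v'\<in>V - ran pl. first_val u E \<phi> i j v' (V - ran pl) \<le> first_val u E \<phi> i j v (V - ran pl)) \<and>
           w \<in> best_resp u E \<phi> j v (V - ran pl - {v}) \<and>
           ff_out N V E u \<phi> (pl(i \<mapsto> v, j \<mapsto> w)) (P - {{i, j}}) (Q (i, j)))) \<Longrightarrow>
     ff_out N V E u \<phi> pl P (bind_pmf (pmf_of_set {(i, j). {i, j} \<in> P}) Q)"
| ff_rsd:
    "\<not> (P \<noteq> {} \<and> (\<exists>x y. {x, y} \<in> E \<and> x \<in> V - ran pl \<and> y \<in> V - ran pl)) \<Longrightarrow>
     rsd_out N V u pl p \<Longrightarrow> ff_out N V E u \<phi> pl P p"

end

theory Submission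
  imports Defs
begin

lemma fp_mem: "s \<in> friend_pairs F \<longleftrightarrow> (\<exists>a b. s = {a, b} \<and> (a, b) \<in> F)"
  unfolding friend_pairs_def by auto

locale inst =
  fixes N :: "'a set" and V :: "'v set" and E :: "'v set set"
    and u :: "'a \<Rightarrow> 'v \<Rightarrow> bool" and F :: "('a \<times> 'a) set" and phi :: real
    and Ao :: "'a \<Rightarrow> 'v"
  assumes finN: "finite N" and finV: "finite V" and cardNV: "card N = card V"
    and Esub: "E \<subseteq> {{x, y} | x y. x \<in> V \<and> y \<in> V \<and> x \<noteq> y}"
    and FN: "F \<subseteq> N \<times> N" and symF: "sym F" and irrF: "\<forall>i. (i, i) \<notin> F"
    and funF: "\<forall>i j k. (i, j) \<in> F \<longrightarrow> (i, k) \<in> F \<longrightarrow> j = k"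
    and phi0: "0 < phi" and phi1: "phi < 1"
    and Aobij: "bij_betw Ao N V"
begin

definition cc :: real where "cc = phi / (4 * phi + 4)"
definition al :: real where "al = cc"
definition be :: real where "be = 2 * phi * cc"

lemma cc_eq: "cc * (4 * phi + 4) = phi"
  using phi0 unfolding cc_def by (simp add: field_simps)

lemma al_be: "4 * al + 2 * be = phi" "al \<ge> 0" "be \<ge> 0" "2 * al \<le> 1"
proof -
  have "4 * al + 2 * be = cc * (4 * phi + 4)" by (simp add: al_def be_def algebra_simps)
  thus "4 * al + 2 * be = phi" using cc_eq by simp
  show "al \<ge> 0" "be \<ge> 0" using phi0 by (auto simp: al_def be_def cc_def)
  show "2 * al \<le> 1" using phi0 phi1 by (auto simp: al_def cc_def field_simps)
qed

definition Gs :: "('a \<rightharpoonup> 'v) \<Rightarrow> real" where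
  "Gs pl = (\<Sum>a\<in>dom pl. of_bool (u a (the (pl a))))"
definition Gc :: "('a \<rightharpoonup> 'v) \<Rightarrow> nat" where
  "Gc pl = card {(a, b) \<in> F. a \<in> dom pl \<and> b \<in> dom pl \<and> {the (pl a), the (pl b)} \<in> E}"
definition Gv :: "('a \<rightharpoonup> 'v) \<Rightarrow> real" where
  "Gv pl = Gs pl + phi * Gc pl"

definition Uset :: "('a \<rightharpoonup> 'v) \<Rightarrow> 'a set" where
  "Uset pl = {a \<in> N. a \<notin> dom pl \<and> Ao a \<notin> ran pl \<and> u a (Ao a)}"

definition matchings :: "'v set \<Rightarrow> 'v set set set" where
  "matchings S = {M. M \<subseteq> E \<and> (\<forall>e\<in>M. e \<subseteq> S) \<and> (\<forall>e1\<in>M. \<forall>e2\<in>M. e1 \<noteq> e2 \<longrightarrow> e1 \<inter> e2 = {})}"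
definition nu :: "'v set \<Rightarrow> nat" where
  "nu S = Max (card ` matchings S)"
definition Kv :: "('a \<rightharpoonup> 'v) \<Rightarrow> 'a set set \<Rightarrow> nat" where
  "Kv pl P = min (card P) (nu (V - ran pl))"

lemma finE: "finite E"
proof -
  have "E \<subseteq> Pow V" using Esub by auto
  thus ?thesis using finV finite_subset by blast
qed

lemma finF: "finite F" using FN finN finite_subset by blast

lemma E_two: "e \<in> E \<Longrightarrow> \<exists>x y. e = {x, y} \<and> x \<in> V \<and> y \<in> V \<and> x \<noteq> y"
  using Esub by blast

lemma E_noself: "{x} \<notin> E"
  using Esub by (auto simp: doubleton_eq_iff) 

lemma fin_matchings: "finite (matchings S)"
  using finE unfolding matchings_def by (auto intro: finite_subset[of _ "Pow E"])

lemma empty_matching: "{} \<in> matchings S"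
  unfolding matchings_def by auto

lemma nu_ge: "M \<in> matchings S \<Longrightarrow> card M \<le> nu S"
  unfolding nu_def using fin_matchings by auto

lemma nu_ex: "\<exists>M \<in> matchings S. card M = nu S"
proof -
  have "nu S \<in> card ` matchings S" unfolding nu_def
    using fin_matchings empty_matching by (intro Max_in) auto
  thus ?thesis by auto
qed

lemma nu_zero:
  assumes "\<not> (\<exists>x y. {x, y} \<in> E \<and> x \<in> S \<and> y \<in> S)"
  shows "nu S = 0"
proof -
  obtain M where M: "M \<in> matchings S" "card M = nu S" using nu_ex by blast
  have "M = {}"
  proof (rule ccontr)
    assume "M \<noteq> {}"
    then obtain e where e: "e \<in> M" by auto
    then have "e \<in> E" "e \<subseteq> S" using M unfolding matchings_def by auto
    then obtain x y where "e = {x, y}" using E_two by blast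
    thus False using assms \<open>e \<in> E\<close> \<open>e \<subseteq> S\<close> by auto
  qed
  thus ?thesis using M by simp
qed

lemma nu_del: "nu S \<le> nu (S - {x}) + 1"
proof -
  obtain M where M: "M \<in> matchings S" "card M = nu S" using nu_ex by blast
  let ?M' = "{e \<in> M. x \<notin> e}"
  have "?M' \<in> matchings (S - {x})" using M(1) unfolding matchings_def by auto
  hence 1: "card ?M' \<le> nu (S - {x})" by (rule nu_ge)
  have fM: "finite M" using M(1) fin_matchings finE unfolding matchings_def
    by (auto intro: finite_subset)
  have "\<forall>a1\<in>{e \<in> M. x \<in> e}. \<forall>a2\<in>{e \<in> M. x \<in> e}. a1 = a2"
    using M(1) unfolding matchings_def by blast
  hence "card {e \<in> M. x \<in> e} \<le> 1"
    using card_le_Suc0_iff_eq[of "{e \<in> M. x \<in> e}"] fM by auto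
  moreover have "M = ?M' \<union> {e \<in> M. x \<in> e}" by auto
  hence "card M \<le> card ?M' + card {e \<in> M. x \<in> e}" by (metis card_Un_le)
  ultimately show ?thesis using 1 M(2) by linarith
qed

lemma nu_del_iso:
  assumes "\<forall>y\<in>S. {x, y} \<notin> E"
  shows "nu S \<le> nu (S - {x})"
proof -
  obtain M where M: "M \<in> matchings S" "card M = nu S" using nu_ex by blast
  have "M \<in> matchings (S - {x})"
    unfolding matchings_def
  proof (intro CollectI conjI ballI)
    fix e assume e: "e \<in> M"
    have "e \<in> E" "e \<subseteq> S" using M(1) e unfolding matchings_def by auto
    then obtain a b where ab: "e = {a, b}" using E_two by blast
    show "e \<subseteq> S - {x}"
    proof
      fix z assume "z \<in> e"
      show "z \<in> S - {x}"
      proof (cases "z = x")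
        case True
        then have "e = {x, a} \<or> e = {x, b}" using ab \<open>z \<in> e\<close> by auto
        thus ?thesis using assms \<open>e \<in> E\<close> \<open>e \<subseteq> S\<close> ab by auto
      qed (use \<open>z \<in> e\<close> \<open>e \<subseteq> S\<close> in auto)
    qed
  qed (use M(1) in \<open>auto simp: matchings_def\<close>)
  thus ?thesis using M(2) nu_ge[of M "S - {x}"] by auto
qed

lemma fu: "(p, q) \<in> F \<Longrightarrow> (p, r) \<in> F \<Longrightarrow> q = r"
  using funF by blast

lemma Fsym: "(p, q) \<in> F \<Longrightarrow> (q, p) \<in> F"
  using symF by (rule symD)

lemma fp_F:
  assumes "{i, j} \<in> friend_pairs F"
  shows "(i, j) \<in> F \<and> (j, i) \<in> F \<and> i \<noteq> j \<and> i \<in> N \<and> j \<in> N"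
proof -
  obtain a b where ab: "{i, j} = {a, b}" "(a, b) \<in> F" using assms unfolding fp_mem by blast
  have ba: "(b, a) \<in> F" using ab(2) by (rule Fsym)
  have "(i = a \<and> j = b) \<or> (i = b \<and> j = a)" using ab(1) by (simp add: doubleton_eq_iff)
  hence ij: "(i, j) \<in> F" using ab(2) ba by blast
  have ji: "(j, i) \<in> F" using ij by (rule Fsym)
  have "i \<noteq> j" using ij irrF by blast
  moreover have "i \<in> N" "j \<in> N" using ij FN by auto
  ultimately show ?thesis using ij ji by blast
qed

lemma fp_disj:
  assumes "s \<in> friend_pairs F" "t \<in> friend_pairs F" "x \<in> s" "x \<in> t"
  shows "s = t"
proof -
  obtain a b where ab: "s = {a, b}" "(a, b) \<in> F" using assms(1) unfolding fp_mem by blast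
  obtain c d where cd: "t = {c, d}" "(c, d) \<in> F" using assms(2) unfolding fp_mem by blast
  have ba: "(b, a) \<in> F" using ab(2) by (rule Fsym)
  have dc: "(d, c) \<in> F" using cd(2) by (rule Fsym)
  have x1: "x = a \<or> x = b" using ab assms(3) by blast
  have x2: "x = c \<or> x = d" using cd assms(4) by blast
  show ?thesis
  proof (cases "x = a")
    case xa: True
    show ?thesis
    proof (cases "x = c")
      case True
      hence "b = d" using fu[of a b d] ab(2) cd(2) xa by simp
      thus ?thesis using ab cd xa True by simp
    next
      case False
      hence "x = d" using x2 by blast
      hence "b = c" using fu[of a b c] ab(2) dc xa by simp
      thus ?thesis using ab cd xa \<open>x = d\<close> by auto
    qed
  next
    case False
    hence xb: "x = b" using x1 by blast
    show ?thesis
    proof (cases "x = c")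
      case True
      hence "a = d" using fu[of b a d] ba cd(2) xb by simp
      thus ?thesis using ab cd xb True by auto
    next
      case False
      hence "x = d" using x2 by blast
      hence "a = c" using fu[of b a c] ba dc xb by simp
      thus ?thesis using ab cd xb \<open>x = d\<close> by auto
    qed
  qed
qed

lemma fin_fp: "finite (friend_pairs F)"
proof -
  have "friend_pairs F \<subseteq> Pow N" using FN unfolding friend_pairs_def by auto
  thus ?thesis using finN finite_subset by blast
qed

lemma SW_eq: "SW N E u F phi A = (\<Sum>i\<in>N. of_bool (u i (A i))) + phi * card {(i, j) \<in> F. {A i, A j} \<in> E}"
proof -
  have fin: "\<forall>i\<in>N. finite {j. (i, j) \<in> F}"
  proof
    fix i
    have "{j. (i, j) \<in> F} \<subseteq> snd ` F" by force
    thus "finite {j. (i, j) \<in> F}" using finF finite_subset by blast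
  qed
  have sig: "Sigma N (\<lambda>i. {j. (i, j) \<in> F}) = F" using FN by auto
  have "(\<Sum>i\<in>N. \<Sum>j\<in>{j. (i, j) \<in> F}. phi * of_bool ({A i, A j} \<in> E))
        = (\<Sum>(i, j)\<in>Sigma N (\<lambda>i. {j. (i, j) \<in> F}). phi * of_bool ({A i, A j} \<in> E))"
    using finN fin by (rule sum.Sigma)
  also have "\<dots> = (\<Sum>(i, j)\<in>F. phi * of_bool ({A i, A j} \<in> E))" using sig by simp
  also have "\<dots> = phi * (\<Sum>x\<in>F. of_bool ((\<lambda>(i, j). {A i, A j} \<in> E) x))"
    by (simp add: sum_distrib_left case_prod_beta)
  also have "\<dots> = phi * card (F \<inter> {x. (\<lambda>(i, j). {A i, A j} \<in> E) x})"
    using finF by simp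
  also have "F \<inter> {x. (\<lambda>(i, j). {A i, A j} \<in> E) x} = {(i, j) \<in> F. {A i, A j} \<in> E}" by auto
  finally have 2: "(\<Sum>i\<in>N. \<Sum>j\<in>{j. (i, j) \<in> F}. phi * of_bool ({A i, A j} \<in> E)) =
       phi * card {(i, j) \<in> F. {A i, A j} \<in> E}" .
  show ?thesis unfolding SW_def utility_def sum.distrib 2 ..
qed

lemma G_le_SW:
  assumes "dom pl \<subseteq> N" "\<forall>i\<in>dom pl. pl i = Some (A i)"
  shows "Gv pl \<le> SW N E u F phi A"
proof -
  have "Gs pl = (\<Sum>a\<in>dom pl. of_bool (u a (A a)))"
    unfolding Gs_def using assms(2) by (intro sum.cong) auto
  also have "\<dots> \<le> (\<Sum>i\<in>N. of_bool (u i (A i)))"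
    using assms(1) finN by (intro sum_mono2) auto
  finally have 1: "Gs pl \<le> (\<Sum>i\<in>N. of_bool (u i (A i)))" .
  have "{(a, b) \<in> F. a \<in> dom pl \<and> b \<in> dom pl \<and> {the (pl a), the (pl b)} \<in> E}
        \<subseteq> {(i, j) \<in> F. {A i, A j} \<in> E}"
  proof
    fix x assume x: "x \<in> {(a, b) \<in> F. a \<in> dom pl \<and> b \<in> dom pl \<and> {the (pl a), the (pl b)} \<in> E}"
    obtain a b where ab: "x = (a, b)" by force
    have "pl a = Some (A a)" "pl b = Some (A b)" using x ab assms(2) by auto
    thus "x \<in> {(i, j) \<in> F. {A i, A j} \<in> E}" using x ab by auto
  qed
  hence "Gc pl \<le> card {(i, j) \<in> F. {A i, A j} \<in> E}"
    unfolding Gc_def by (rule card_mono[OF finite_subset[OF _ finF], rotated]) auto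
  hence "phi * Gc pl \<le> phi * card {(i, j) \<in> F. {A i, A j} \<in> E}"
    using phi0 by simp
  thus ?thesis using 1 unfolding SW_eq Gv_def by linarith
qed

lemma Gs_upd: "finite (dom pl) \<Longrightarrow> i \<notin> dom pl \<Longrightarrow> Gs (pl(i \<mapsto> v)) = Gs pl + of_bool (u i v)"
proof -
  assume a: "finite (dom pl)" "i \<notin> dom pl"
  have "Gs (pl(i \<mapsto> v)) = of_bool (u i v) + (\<Sum>x\<in>dom pl. of_bool (u x (the ((pl(i \<mapsto> v)) x))))"
    unfolding Gs_def using a by simp
  also have "(\<Sum>x\<in>dom pl. of_bool (u x (the ((pl(i \<mapsto> v)) x)))) = Gs pl"
    unfolding Gs_def using a by (intro sum.cong) auto
  finally show ?thesis by linarith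
qed

lemma Gc_mono: "pl \<subseteq>\<^sub>m pl' \<Longrightarrow> Gc pl \<le> Gc pl'"
  unfolding Gc_def
  by (intro card_mono[OF finite_subset[OF _ finF]]) (auto simp: map_le_def dom_def)

lemma map_le_new: "i \<notin> dom pl \<Longrightarrow> pl \<subseteq>\<^sub>m pl(i \<mapsto> v)"
  by (auto simp: map_le_def)

lemma G_upd1:
  assumes "dom pl \<subseteq> N" "i \<notin> dom pl"
  shows "Gv (pl(i \<mapsto> v)) \<ge> Gv pl + of_bool (u i v)"
proof -
  have fd: "finite (dom pl)" using assms(1) finN by (rule finite_subset)
  have "Gs (pl(i \<mapsto> v)) = Gs pl + of_bool (u i v)" by (rule Gs_upd[OF fd assms(2)])
  moreover have "Gc pl \<le> Gc (pl(i \<mapsto> v))" by (rule Gc_mono[OF map_le_new[OF assms(2)]])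
  hence "phi * Gc pl \<le> phi * Gc (pl(i \<mapsto> v))" using phi0 by simp
  ultimately show ?thesis unfolding Gv_def by linarith
qed

lemma G_upd2:
  assumes "dom pl \<subseteq> N" "i \<notin> dom pl" "j \<notin> dom pl" "i \<noteq> j" "(i, j) \<in> F" "(j, i) \<in> F"
  shows "Gv (pl(i \<mapsto> v, j \<mapsto> w)) \<ge> Gv pl + of_bool (u i v) + of_bool (u j w) + 2 * phi * of_bool ({v, w} \<in> E)"
proof -
  have fd: "finite (dom pl)" using assms(1) finN by (rule finite_subset)
  have "Gs (pl(i \<mapsto> v, j \<mapsto> w)) = Gs (pl(i \<mapsto> v)) + of_bool (u j w)"
    using fd assms by (intro Gs_upd) auto
  also have "Gs (pl(i \<mapsto> v)) = Gs pl + of_bool (u i v)" by (rule Gs_upd[OF fd assms(2)])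
  finally have s: "Gs (pl(i \<mapsto> v, j \<mapsto> w)) = Gs pl + of_bool (u i v) + of_bool (u j w)" .
  let ?p2 = "pl(i \<mapsto> v, j \<mapsto> w)"
  let ?A = "{(a, b) \<in> F. a \<in> dom pl \<and> b \<in> dom pl \<and> {the (pl a), the (pl b)} \<in> E}"
  let ?B = "{(a, b) \<in> F. a \<in> dom ?p2 \<and> b \<in> dom ?p2 \<and> {the (?p2 a), the (?p2 b)} \<in> E}"
  have fB: "finite ?B" by (rule finite_subset[OF _ finF]) auto
  have le: "pl \<subseteq>\<^sub>m ?p2" using assms by (auto simp: map_le_def)
  have c: "Gc ?p2 \<ge> Gc pl + 2 * of_bool ({v, w} \<in> E)"
  proof (cases "{v, w} \<in> E")
    case True
    have subA: "?A \<subseteq> ?B"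
    proof
      fix x assume x: "x \<in> ?A"
      obtain a b where ab: "x = (a, b)" by force
      have ad: "a \<in> dom pl" "b \<in> dom pl" using x ab by auto
      hence ne: "a \<noteq> i" "a \<noteq> j" "b \<noteq> i" "b \<noteq> j" using assms(2,3) by auto
      hence "?p2 a = pl a" "?p2 b = pl b" by auto
      thus "x \<in> ?B" using x ab ad ne by auto
    qed
    have ij: "(i, j) \<in> ?B" "(j, i) \<in> ?B" using True assms(4-6) by (auto simp: insert_commute)
    have sub: "?A \<union> {(i, j), (j, i)} \<subseteq> ?B" using subA ij by blast
    have fA: "finite ?A" by (rule finite_subset[OF _ finF]) auto
    have dj: "?A \<inter> {(i, j), (j, i)} = {}" using assms(2,3) by auto
    have c2: "card {(i, j), (j, i)} = 2" using assms(4) by auto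
    have "card (?A \<union> {(i, j), (j, i)}) = card ?A + card {(i, j), (j, i)}"
      using fA dj by (intro card_Un_disjoint) auto
    hence "card (?A \<union> {(i, j), (j, i)}) = card ?A + 2" using c2 by simp
    hence "card ?A + 2 \<le> card ?B" using card_mono[OF fB sub] by simp
    thus ?thesis using True unfolding Gc_def by simp
  next
    case False
    thus ?thesis using Gc_mono[OF le] by simp
  qed
  have c': "real (Gc ?p2) \<ge> real (Gc pl) + 2 * of_bool ({v, w} \<in> E)"
    using c by (cases "{v, w} \<in> E") simp_all
  have "phi * real (Gc ?p2) \<ge> phi * (real (Gc pl) + 2 * of_bool ({v, w} \<in> E))"
    using c' phi0 by (intro mult_left_mono) auto
  thus ?thesis unfolding Gv_def s by (simp add: algebra_simps)
qed

lemma ran_mono_le: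
  assumes pl: "pl \<subseteq>\<^sub>m pl'" shows "ran pl \<subseteq> ran pl'"
proof
  fix y assume "y \<in> ran pl"
  then obtain a where a: "pl a = Some y" by (auto simp: ran_def)
  hence "pl' a = Some y" using pl unfolding map_le_def by (metis domI)
  thus "y \<in> ran pl'" by (rule ranI)
qed

lemma Uset_mono:
  assumes "pl \<subseteq>\<^sub>m pl'" shows "Uset pl' \<subseteq> Uset pl"
  unfolding Uset_def using ran_mono_le[OF assms] map_le_implies_dom_le[OF assms] by blast

lemma Uset_diff: "Uset pl - Uset pl' \<subseteq> (dom pl' - dom pl) \<union> {a \<in> N. Ao a \<in> ran pl' - ran pl}"
  unfolding Uset_def by auto

lemma fin_Uset: "finite (Uset pl)"
  unfolding Uset_def using finN by auto

lemma card_pre: "finite T \<Longrightarrow> card {a \<in> N. Ao a \<in> T} \<le> card T"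
proof -
  assume fT: "finite T"
  have "inj_on Ao {a \<in> N. Ao a \<in> T}"
    by (rule inj_on_subset[OF bij_betw_imp_inj_on[OF Aobij]]) auto
  moreover have "Ao ` {a \<in> N. Ao a \<in> T} \<subseteq> T" by auto
  ultimately show ?thesis using fT by (rule card_inj_on_le)
qed

lemma U_drop:
  assumes "pl \<subseteq>\<^sub>m pl'" "Uset pl - Uset pl' \<subseteq> X" "finite X"
  shows "real (card (Uset pl')) \<ge> real (card (Uset pl)) - card X"
proof -
  have d: "card (Uset pl - Uset pl') = card (Uset pl) - card (Uset pl')"
    by (rule card_Diff_subset[OF fin_Uset Uset_mono[OF assms(1)]])
  have "card (Uset pl') \<le> card (Uset pl)" by (rule card_mono[OF fin_Uset Uset_mono[OF assms(1)]])
  hence "card (Uset pl) = card (Uset pl') + card (Uset pl - Uset pl')" using d by simp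
  moreover have "card (Uset pl - Uset pl') \<le> card X" using assms card_mono by blast
  ultimately show ?thesis by linarith
qed

lemma avg_bind2:
  fixes f :: "'b \<Rightarrow> real"
  assumes X: "finite X" "X \<noteq> {}" and fin: "\<forall>x\<in>X. finite (set_pmf (Q x))"
    and sm: "(\<Sum>x\<in>X. measure_pmf.expectation (Q x) f) \<ge> real (card X) * T"
  shows "finite (set_pmf (bind_pmf (pmf_of_set X) Q)) \<and>
         measure_pmf.expectation (bind_pmf (pmf_of_set X) Q) f \<ge> T"
proof
  show "finite (set_pmf (bind_pmf (pmf_of_set X) Q))"
    using X fin by (simp add: set_bind_pmf)
  have cX: "real (card X) > 0" using X by (simp add: card_gt_0_iff)
  have "measure_pmf.expectation (bind_pmf (pmf_of_set X) Q) f =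
        (\<Sum>a\<in>X. measure_pmf.expectation (Q a) f /\<^sub>R real (card X))"
    using X fin by (intro pmf_expectation_bind_pmf_of_set) auto
  also have "\<dots> = (\<Sum>a\<in>X. measure_pmf.expectation (Q a) f) / real (card X)"
    by (simp add: sum_divide_distrib divide_inverse_commute sum_distrib_left)
  also have "\<dots> \<ge> T" using sm cX by (simp add: field_simps)
  finally show "measure_pmf.expectation (bind_pmf (pmf_of_set X) Q) f \<ge> T" .
qed

lemma avg_bind:
  fixes f :: "'b \<Rightarrow> real"
  assumes X: "finite X" "X \<noteq> {}"
    and each: "\<forall>x\<in>X. finite (set_pmf (Q x)) \<and> measure_pmf.expectation (Q x) f \<ge> T"
  shows "finite (set_pmf (bind_pmf (pmf_of_set X) Q)) \<and>
         measure_pmf.expectation (bind_pmf (pmf_of_set X) Q) f \<ge> T"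
proof (rule avg_bind2[OF X])
  show "\<forall>x\<in>X. finite (set_pmf (Q x))" using each by blast
  have "(\<Sum>x\<in>X. T) \<le> (\<Sum>x\<in>X. measure_pmf.expectation (Q x) f)"
    using each by (intro sum_mono) auto
  thus "real (card X) * T \<le> (\<Sum>x\<in>X. measure_pmf.expectation (Q x) f)" by simp
qed

lemma rsd_claim:
  assumes "rsd_out N V u pl p"
  shows "dom pl \<subseteq> N \<longrightarrow> finite (set_pmf p) \<and>
           measure_pmf.expectation p (SW N E u F phi) \<ge> Gv pl + al * card (Uset pl)"
  using assms
proof (induction rule: rsd_out.induct)
  case (rsd_pick pl Q)
  let ?X = "{i \<in> N - dom pl. \<exists>v\<in>V - ran pl. u i v}"
  show ?case
  proof
    assume dN: "dom pl \<subseteq> N"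
    have fX: "finite ?X" using finN by auto
    show "finite (set_pmf (pmf_of_set ?X \<bind> Q)) \<and>
      measure_pmf.expectation (pmf_of_set ?X \<bind> Q) (SW N E u F phi) \<ge> Gv pl + al * card (Uset pl)"
    proof (rule avg_bind[OF fX rsd_pick(1)], rule ballI)
      fix i assume iX: "i \<in> ?X"
      obtain v where v: "v \<in> V - ran pl" "u i v"
        and ih: "dom (pl(i \<mapsto> v)) \<subseteq> N \<longrightarrow> finite (set_pmf (Q i)) \<and>
           measure_pmf.expectation (Q i) (SW N E u F phi) \<ge> Gv (pl(i \<mapsto> v)) + al * card (Uset (pl(i \<mapsto> v)))"
        using rsd_pick(2) iX by blast
      have iN: "i \<in> N" "i \<notin> dom pl" using iX by auto
      have d2: "dom (pl(i \<mapsto> v)) \<subseteq> N" using dN iN by auto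
      have g: "Gv (pl(i \<mapsto> v)) \<ge> Gv pl + 1" using G_upd1[OF dN iN(2), of v] v by simp
      have le: "pl \<subseteq>\<^sub>m pl(i \<mapsto> v)" by (rule map_le_new[OF iN(2)])
      have dif: "Uset pl - Uset (pl(i \<mapsto> v)) \<subseteq> {i} \<union> {a \<in> N. Ao a \<in> {v}}"
        using Uset_diff[of pl "pl(i \<mapsto> v)"] iN by (auto simp: ran_map_upd domIff)
      have "real (card (Uset (pl(i \<mapsto> v)))) \<ge> real (card (Uset pl)) - card ({i} \<union> {a \<in> N. Ao a \<in> {v}})"
        by (rule U_drop[OF le dif]) (use finN in auto)
      moreover have "card ({i} \<union> {a \<in> N. Ao a \<in> {v}}) \<le> 2"
      proof -
        have "card ({i} \<union> {a \<in> N. Ao a \<in> {v}}) \<le> card {i} + card {a \<in> N. Ao a \<in> {v}}"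
          by (rule card_Un_le)
        moreover have "card {a \<in> N. Ao a \<in> {v}} \<le> card {v}" by (rule card_pre) simp
        ultimately show ?thesis by simp
      qed
      ultimately have u: "real (card (Uset (pl(i \<mapsto> v)))) \<ge> real (card (Uset pl)) - 2" by linarith
      have "al * real (card (Uset (pl(i \<mapsto> v)))) \<ge> al * (real (card (Uset pl)) - 2)"
        using u al_be(2) by (rule mult_left_mono)
      thus "finite (set_pmf (Q i)) \<and>
          measure_pmf.expectation (Q i) (SW N E u F phi) \<ge> Gv pl + al * card (Uset pl)"
        using ih d2 g al_be(4) by (auto simp: algebra_simps)
    qed
  qed
next
  case (rsd_stop pl A)
  show ?case
  proof
    assume dN: "dom pl \<subseteq> N"
    have "Uset pl = {}"
    proof (rule ccontr)
      assume "Uset pl \<noteq> {}"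
      then obtain a where a: "a \<in> N" "a \<notin> dom pl" "Ao a \<notin> ran pl" "u a (Ao a)"
        unfolding Uset_def by auto
      have "Ao a \<in> V" using a(1) Aobij bij_betwE by blast
      thus False using rsd_stop(1) a by auto
    qed
    thus "finite (set_pmf (return_pmf A)) \<and>
      measure_pmf.expectation (return_pmf A) (SW N E u F phi) \<ge> Gv pl + al * card (Uset pl)"
      using G_le_SW[OF dN rsd_stop(3)] by simp
  qed
qed

definition gain :: "'a \<Rightarrow> 'a \<Rightarrow> 'v \<Rightarrow> 'v \<Rightarrow> real" where
  "gain i j v w = of_bool (u i v) + of_bool (u j w) + 2 * phi * of_bool ({v, w} \<in> E)"

definition Tv :: "('a \<rightharpoonup> 'v) \<Rightarrow> 'a set set \<Rightarrow> real" where
  "Tv pl P = Gv pl + al * card (Uset pl) + be * Kv pl P"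

lemma bad_struct:
  assumes vS: "v \<in> S"
    and fmax: "\<forall>v'\<in>S. first_val u E phi i j v' S \<le> first_val u E phi i j v S"
    and w: "w \<in> best_resp u E phi j v (S - {v})"
    and edge: "{x, y} \<in> E" "x \<in> S" "y \<in> S"
    and bad: "gain i j v w < min 1 (2 * phi)"
  shows "(\<forall>z\<in>S. \<not> u i z) \<and> (\<forall>z\<in>S. u j z \<longleftrightarrow> z = v) \<and> (\<forall>z\<in>S. {v, z} \<notin> E)"
proof -
  have nuiv: "\<not> u i v" using bad phi0 phi1 unfolding gain_def by (auto simp: of_bool_def split: if_splits)
  have nujw: "\<not> u j w" using bad phi0 phi1 unfolding gain_def by (auto simp: of_bool_def split: if_splits)
  have nadj: "{v, w} \<notin> E" using bad phi0 phi1 unfolding gain_def by (auto simp: of_bool_def split: if_splits)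
  have wS: "w \<in> S - {v}" and wmax: "\<forall>w'\<in>S - {v}. second_val u E phi j v w' \<le> second_val u E phi j v w"
    using w unfolding best_resp_def by auto
  have sw0: "second_val u E phi j v w = 0" using nujw nadj unfolding second_val_def by simp
  have rest: "\<forall>z\<in>S - {v}. \<not> u j z \<and> {v, z} \<notin> E"
  proof
    fix z assume z: "z \<in> S - {v}"
    have "second_val u E phi j v z \<le> 0" using wmax z sw0 by auto
    thus "\<not> u j z \<and> {v, z} \<notin> E" using phi0 unfolding second_val_def
      by (auto simp: of_bool_def split: if_splits)
  qed
  have iso: "\<forall>z\<in>S. {v, z} \<notin> E"
  proof
    fix z assume "z \<in> S"
    show "{v, z} \<notin> E"
    proof (cases "z = v")
      case True thus ?thesis using E_noself by simp
    qed (use rest \<open>z \<in> S\<close> in auto)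
  qed
  have fv0: "first_val u E phi i j v S = 0"
  proof -
    have "\<not> (\<forall>w'\<in>best_resp u E phi j v (S - {v}). {v, w'} \<in> E)" using w nadj by blast
    thus ?thesis using nuiv unfolding first_val_def by simp
  qed
  have fvle: "\<forall>z\<in>S. first_val u E phi i j z S \<le> 0" using fmax fv0 by simp
  have a: "\<forall>z\<in>S. \<not> u i z"
  proof (intro ballI notI)
    fix z assume "z \<in> S" "u i z"
    hence "first_val u E phi i j z S \<ge> 1" using phi0 unfolding first_val_def by simp
    thus False using fvle \<open>z \<in> S\<close> by fastforce
  qed
  have xy: "x \<noteq> y" using edge(1) E_noself by auto
  have "first_val u E phi i j x S \<le> 0" using fvle edge(2) by blast
  hence "\<not> (\<forall>w'\<in>best_resp u E phi j x (S - {x}). {x, w'} \<in> E)"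
    using phi0 unfolding first_val_def by (auto simp: of_bool_def split: if_splits)
  then obtain w' where w': "w' \<in> best_resp u E phi j x (S - {x})" "{x, w'} \<notin> E" by blast
  have w'S: "w' \<in> S - {x}" and "second_val u E phi j x y \<le> second_val u E phi j x w'"
    using w' edge xy unfolding best_resp_def by auto
  hence "phi \<le> of_bool (u j w')" using w'(2) edge(1) unfolding second_val_def
    by (auto simp: of_bool_def split: if_splits)
  hence ujw': "u j w'" using phi0 by (auto simp: of_bool_def split: if_splits)
  hence "w' = v" using rest w'S by blast
  hence ujv: "u j v" using ujw' by simp
  have b: "\<forall>z\<in>S. u j z \<longleftrightarrow> z = v" using rest ujv by blast
  show ?thesis using a b iso by blast
qed

lemma rev_good:
  assumes v2S: "v2 \<in> S"
    and fmax: "\<forall>v'\<in>S. first_val u E phi j i v' S \<le> first_val u E phi j i v2 S"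
    and vS: "v \<in> S" and b: "\<forall>z\<in>S. u j z \<longleftrightarrow> z = v"
  shows "v2 = v"
proof (rule ccontr)
  assume ne: "v2 \<noteq> v"
  hence "\<not> u j v2" using b v2S by blast
  hence "first_val u E phi j i v2 S \<le> phi" unfolding first_val_def using phi0 by simp
  moreover have "first_val u E phi j i v S \<ge> 1" using b vS phi0 unfolding first_val_def by simp
  ultimately show False using fmax vS phi1 by fastforce
qed

definition inv :: "('a \<rightharpoonup> 'v) \<Rightarrow> 'a set set \<Rightarrow> bool" where
  "inv pl P \<longleftrightarrow> dom pl \<subseteq> N \<and> finite P \<and> P \<subseteq> friend_pairs F \<and> (\<forall>s\<in>P. s \<inter> dom pl = {})"

lemma step_facts:
  assumes "inv pl P" "{i, j} \<in> P"
  shows "i \<notin> dom pl" "j \<notin> dom pl" "i \<noteq> j" "(i, j) \<in> F" "(j, i) \<in> F" "i \<in> N" "j \<in> N"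
    "{i, j} \<in> friend_pairs F"
proof -
  have fp: "{i, j} \<in> friend_pairs F" using assms unfolding inv_def by blast
  note f = fp_F[OF fp]
  have "{i, j} \<inter> dom pl = {}" using assms unfolding inv_def by blast
  thus "i \<notin> dom pl" "j \<notin> dom pl" by auto
  show "i \<noteq> j" "(i, j) \<in> F" "(j, i) \<in> F" "i \<in> N" "j \<in> N" using f by auto
  show "{i, j} \<in> friend_pairs F" by (rule fp)
qed

lemma inv_step:
  assumes "inv pl P" "{i, j} \<in> P"
  shows "inv (pl(i \<mapsto> v, j \<mapsto> w)) (P - {{i, j}})"
proof -
  note sf = step_facts[OF assms]
  have PF: "P \<subseteq> friend_pairs F" using assms(1) unfolding inv_def by blast
  have "\<forall>s\<in>P - {{i, j}}. s \<inter> dom (pl(i \<mapsto> v, j \<mapsto> w)) = {}"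
  proof
    fix s assume s: "s \<in> P - {{i, j}}"
    have sF: "s \<in> friend_pairs F" using s PF by blast
    have "i \<notin> s"
    proof
      assume "i \<in> s"
      hence "s = {i, j}" using fp_disj[OF sF sf(8), of i] by simp
      thus False using s by simp
    qed
    moreover have "j \<notin> s"
    proof
      assume "j \<in> s"
      hence "s = {i, j}" using fp_disj[OF sF sf(8), of j] by simp
      thus False using s by simp
    qed
    moreover have "s \<inter> dom pl = {}" using s assms(1) unfolding inv_def by blast
    moreover have "dom (pl(i \<mapsto> v, j \<mapsto> w)) = dom pl \<union> {i, j}" by auto
    ultimately show "s \<inter> dom (pl(i \<mapsto> v, j \<mapsto> w)) = {}" by blast
  qed
  moreover have "dom (pl(i \<mapsto> v, j \<mapsto> w)) \<subseteq> N" using assms(1) sf(6,7) unfolding inv_def by auto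
  moreover have "finite (P - {{i, j}})" "P - {{i, j}} \<subseteq> friend_pairs F"
    using assms(1) unfolding inv_def by auto
  ultimately show ?thesis unfolding inv_def by blast
qed

lemma ran_step:
  assumes "i \<notin> dom pl" "j \<notin> dom pl" "i \<noteq> j"
  shows "ran (pl(i \<mapsto> v, j \<mapsto> w)) = ran pl \<union> {v, w}"
proof -
  have "(pl(i \<mapsto> v)) j = None" using assms by auto
  moreover have "pl i = None" using assms by auto
  ultimately show ?thesis by auto
qed

lemma U_step:
  assumes "i \<notin> dom pl" "j \<notin> dom pl" "i \<noteq> j"
    and cnd: "\<forall>c\<in>{i, j}. \<forall>z\<in>V - ran pl. u c z \<longrightarrow> z \<in> {v, w}"
  shows "real (card (Uset (pl(i \<mapsto> v, j \<mapsto> w)))) \<ge> real (card (Uset pl)) - 2"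
proof -
  let ?p2 = "pl(i \<mapsto> v, j \<mapsto> w)"
  have le: "pl \<subseteq>\<^sub>m ?p2" using assms by (auto simp: map_le_def)
  have r: "ran ?p2 = ran pl \<union> {v, w}" by (rule ran_step[OF assms(1-3)])
  have dif: "Uset pl - Uset ?p2 \<subseteq> {a \<in> N. Ao a \<in> {v, w}}"
  proof
    fix a assume a: "a \<in> Uset pl - Uset ?p2"
    hence a1: "a \<in> N" "a \<notin> dom pl" "Ao a \<notin> ran pl" "u a (Ao a)" unfolding Uset_def by auto
    have AoV: "Ao a \<in> V" using a1(1) Aobij bij_betwE by blast
    show "a \<in> {a \<in> N. Ao a \<in> {v, w}}"
    proof (cases "a \<in> {i, j}")
      case True
      thus ?thesis using cnd a1 AoV by blast
    next
      case False
      thus ?thesis using a a1 r unfolding Uset_def by auto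
    qed
  qed
  have "real (card (Uset ?p2)) \<ge> real (card (Uset pl)) - card {a \<in> N. Ao a \<in> {v, w}}"
    by (rule U_drop[OF le dif]) (use finN in auto)
  moreover have "card {a \<in> N. Ao a \<in> {v, w}} \<le> card {v, w}" by (rule card_pre) simp
  moreover have "card {v, w} \<le> 2" by (simp add: card_insert_if)
  ultimately show ?thesis by linarith
qed

lemma U_step4:
  assumes "i \<notin> dom pl" "j \<notin> dom pl" "i \<noteq> j"
  shows "real (card (Uset (pl(i \<mapsto> v, j \<mapsto> w)))) \<ge> real (card (Uset pl)) - 4"
proof -
  let ?p2 = "pl(i \<mapsto> v, j \<mapsto> w)"
  have le: "pl \<subseteq>\<^sub>m ?p2" using assms by (auto simp: map_le_def)
  have r: "ran ?p2 = ran pl \<union> {v, w}" by (rule ran_step[OF assms(1-3)])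
  have dif: "Uset pl - Uset ?p2 \<subseteq> {i, j} \<union> {a \<in> N. Ao a \<in> {v, w}}"
    using Uset_diff[of pl ?p2] r by auto
  have "real (card (Uset ?p2)) \<ge> real (card (Uset pl)) - card ({i, j} \<union> {a \<in> N. Ao a \<in> {v, w}})"
    by (rule U_drop[OF le dif]) (use finN in auto)
  moreover have "card ({i, j} \<union> {a \<in> N. Ao a \<in> {v, w}}) \<le> card {i, j} + card {a \<in> N. Ao a \<in> {v, w}}"
    by (rule card_Un_le)
  moreover have "card {a \<in> N. Ao a \<in> {v, w}} \<le> card {v, w}" by (rule card_pre) simp
  moreover have "card {v, w} \<le> 2" by (simp add: card_insert_if)
  moreover have "card {i, j} \<le> 2" by (simp add: card_insert_if)
  ultimately show ?thesis by linarith
qed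

lemma K_step:
  assumes "i \<notin> dom pl" "j \<notin> dom pl" "i \<noteq> j" "{i, j} \<in> P" "finite P"
  shows "Kv pl P \<le> Kv (pl(i \<mapsto> v, j \<mapsto> w)) (P - {{i, j}}) + 2"
    and "(\<forall>z\<in>V - ran pl. {v, z} \<notin> E) \<Longrightarrow> Kv pl P \<le> Kv (pl(i \<mapsto> v, j \<mapsto> w)) (P - {{i, j}}) + 1"
proof -
  have r: "V - ran (pl(i \<mapsto> v, j \<mapsto> w)) = (V - ran pl) - {v} - {w}"
    using ran_step[OF assms(1-3)] by auto
  have cP: "card (P - {{i, j}}) = card P - 1" "card P \<ge> 1"
    using assms(4,5) by (auto simp: card_Diff_singleton Suc_le_eq card_gt_0_iff)
  have n1: "nu (V - ran pl - {v}) \<le> nu (V - ran pl - {v} - {w}) + 1" by (rule nu_del)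
  have n2: "nu (V - ran pl) \<le> nu (V - ran pl - {v}) + 1" by (rule nu_del)
  show "Kv pl P \<le> Kv (pl(i \<mapsto> v, j \<mapsto> w)) (P - {{i, j}}) + 2"
    unfolding Kv_def r using n1 n2 cP by linarith
  assume iso: "\<forall>z\<in>V - ran pl. {v, z} \<notin> E"
  have n3: "nu (V - ran pl) \<le> nu (V - ran pl - {v})" by (rule nu_del_iso[OF iso])
  show "Kv pl P \<le> Kv (pl(i \<mapsto> v, j \<mapsto> w)) (P - {{i, j}}) + 1"
    unfolding Kv_def r using n1 n3 cP by linarith
qed

lemma gain_nonneg: "gain i j v w \<ge> 0"
  unfolding gain_def using phi0 by auto

lemma step_LB:
  assumes iv: "inv pl P" and ij: "{i, j} \<in> P"
    and w: "w \<in> best_resp u E phi j v (V - ran pl - {v})"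
  shows "Tv (pl(i \<mapsto> v, j \<mapsto> w)) (P - {{i, j}}) \<ge> Tv pl P + gain i j v w - 4 * al - 2 * be"
    and "(\<forall>c\<in>{i, j}. \<forall>z\<in>V - ran pl. u c z \<longrightarrow> z \<in> {v, w}) \<Longrightarrow> (\<forall>z\<in>V - ran pl. {v, z} \<notin> E) \<Longrightarrow>
         Tv (pl(i \<mapsto> v, j \<mapsto> w)) (P - {{i, j}}) \<ge> Tv pl P + gain i j v w - 2 * al - be"
proof -
  note sf = step_facts[OF iv ij]
  have dN: "dom pl \<subseteq> N" and fP: "finite P" using iv unfolding inv_def by auto
  have G: "Gv (pl(i \<mapsto> v, j \<mapsto> w)) \<ge> Gv pl + gain i j v w"
    using G_upd2[OF dN sf(1-5), of v w] unfolding gain_def by simp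
  have K2: "real (Kv pl P) \<le> real (Kv (pl(i \<mapsto> v, j \<mapsto> w)) (P - {{i, j}})) + 2"
    using K_step(1)[OF sf(1-3) ij fP, of v w] by linarith
  have U4: "real (card (Uset (pl(i \<mapsto> v, j \<mapsto> w)))) \<ge> real (card (Uset pl)) - 4"
    by (rule U_step4[OF sf(1-3)])
  have a1: "al * real (card (Uset (pl(i \<mapsto> v, j \<mapsto> w)))) \<ge> al * (real (card (Uset pl)) - 4)"
    using U4 al_be(2) by (rule mult_left_mono)
  have b1: "be * real (Kv (pl(i \<mapsto> v, j \<mapsto> w)) (P - {{i, j}})) \<ge> be * (real (Kv pl P) - 2)"
    using K2 al_be(3) by (intro mult_left_mono) auto
  show "Tv (pl(i \<mapsto> v, j \<mapsto> w)) (P - {{i, j}}) \<ge> Tv pl P + gain i j v w - 4 * al - 2 * be"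
    unfolding Tv_def using G a1 b1 by (simp add: algebra_simps)
  assume cnd: "\<forall>c\<in>{i, j}. \<forall>z\<in>V - ran pl. u c z \<longrightarrow> z \<in> {v, w}"
    and iso: "\<forall>z\<in>V - ran pl. {v, z} \<notin> E"
  have K1: "real (Kv pl P) \<le> real (Kv (pl(i \<mapsto> v, j \<mapsto> w)) (P - {{i, j}})) + 1"
    using K_step(2)[OF sf(1-3) ij fP iso, of w] by linarith
  have U2: "real (card (Uset (pl(i \<mapsto> v, j \<mapsto> w)))) \<ge> real (card (Uset pl)) - 2"
    by (rule U_step[OF sf(1-3) cnd])
  have a2: "al * real (card (Uset (pl(i \<mapsto> v, j \<mapsto> w)))) \<ge> al * (real (card (Uset pl)) - 2)"
    using U2 al_be(2) by (rule mult_left_mono)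
  have b2: "be * real (Kv (pl(i \<mapsto> v, j \<mapsto> w)) (P - {{i, j}})) \<ge> be * (real (Kv pl P) - 1)"
    using K1 al_be(3) by (intro mult_left_mono) auto
  show "Tv (pl(i \<mapsto> v, j \<mapsto> w)) (P - {{i, j}}) \<ge> Tv pl P + gain i j v w - 2 * al - be"
    unfolding Tv_def using G a2 b2 by (simp add: algebra_simps)
qed

definition valid :: "('a \<rightharpoonup> 'v) \<Rightarrow> 'a \<Rightarrow> 'a \<Rightarrow> 'v \<Rightarrow> 'v \<Rightarrow> bool" where
  "valid pl i j v w \<longleftrightarrow> v \<in> V - ran pl \<and>
     (\<forall>v'\<in>V - ran pl. first_val u E phi i j v' (V - ran pl) \<le> first_val u E phi i j v (V - ran pl)) \<and>
     w \<in> best_resp u E phi j v (V - ran pl - {v})"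

lemma pair_half:
  assumes iv: "inv pl P" and ij: "{i, j} \<in> P"
    and edge: "{x, y} \<in> E" "x \<in> V - ran pl" "y \<in> V - ran pl"
    and v1: "valid pl i j v1 w1" and v2: "valid pl j i v2 w2"
    and bad: "gain i j v1 w1 < min 1 (2 * phi)"
  shows "Tv (pl(i \<mapsto> v1, j \<mapsto> w1)) (P - {{i, j}}) + Tv (pl(j \<mapsto> v2, i \<mapsto> w2)) (P - {{j, i}}) \<ge> 2 * Tv pl P"
proof -
  let ?S = "V - ran pl"
  have ji: "{j, i} \<in> P" using ij by (simp add: insert_commute)
  have st: "(\<forall>z\<in>?S. \<not> u i z) \<and> (\<forall>z\<in>?S. u j z \<longleftrightarrow> z = v1) \<and> (\<forall>z\<in>?S. {v1, z} \<notin> E)"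
    using bad_struct[of v1 ?S i j w1 x y] v1 edge bad unfolding valid_def by blast
  have v21: "v2 = v1"
    using rev_good[of v2 ?S j i v1] v1 v2 st unfolding valid_def by blast
  have g2: "gain j i v2 w2 \<ge> 1"
  proof -
    have "u j v2" using st v21 v1 unfolding valid_def by blast
    thus ?thesis unfolding gain_def using phi0 by auto
  qed
  have c1: "\<forall>c\<in>{i, j}. \<forall>z\<in>?S. u c z \<longrightarrow> z \<in> {v1, w1}" using st by blast
  have c2: "\<forall>c\<in>{j, i}. \<forall>z\<in>?S. u c z \<longrightarrow> z \<in> {v2, w2}" using st v21 by blast
  have iso1: "\<forall>z\<in>?S. {v1, z} \<notin> E" using st by blast
  have iso2: "\<forall>z\<in>?S. {v2, z} \<notin> E" using st v21 by blast
  have L1: "Tv (pl(i \<mapsto> v1, j \<mapsto> w1)) (P - {{i, j}}) \<ge> Tv pl P + gain i j v1 w1 - 2 * al - be"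
    using step_LB(2)[OF iv ij _ c1 iso1] v1 unfolding valid_def by blast
  have L2: "Tv (pl(j \<mapsto> v2, i \<mapsto> w2)) (P - {{j, i}}) \<ge> Tv pl P + gain j i v2 w2 - 2 * al - be"
    using step_LB(2)[OF iv ji _ c2 iso2] v2 unfolding valid_def by blast
  show ?thesis using L1 L2 g2 gain_nonneg[of i j v1 w1] al_be(1) phi1 by linarith
qed

lemma pair_ineq:
  assumes iv: "inv pl P" and ij: "{i, j} \<in> P"
    and edge: "{x, y} \<in> E" "x \<in> V - ran pl" "y \<in> V - ran pl"
    and v1: "valid pl i j v1 w1" and v2: "valid pl j i v2 w2"
  shows "Tv (pl(i \<mapsto> v1, j \<mapsto> w1)) (P - {{i, j}}) + Tv (pl(j \<mapsto> v2, i \<mapsto> w2)) (P - {{j, i}}) \<ge> 2 * Tv pl P"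
proof -
  have ji: "{j, i} \<in> P" using ij by (simp add: insert_commute)
  show ?thesis
  proof (cases "gain i j v1 w1 < min 1 (2 * phi)")
    case True
    thus ?thesis using pair_half[OF iv ij edge v1 v2] by blast
  next
    case F1: False
    show ?thesis
    proof (cases "gain j i v2 w2 < min 1 (2 * phi)")
      case True
      thus ?thesis using pair_half[OF iv ji edge v2 v1] by linarith
    next
      case False
      have m: "min 1 (2 * phi) \<ge> phi" using phi0 phi1 by simp
      have L1: "Tv (pl(i \<mapsto> v1, j \<mapsto> w1)) (P - {{i, j}}) \<ge> Tv pl P + gain i j v1 w1 - 4 * al - 2 * be"
        using step_LB(1)[OF iv ij] v1 unfolding valid_def by blast
      have L2: "Tv (pl(j \<mapsto> v2, i \<mapsto> w2)) (P - {{j, i}}) \<ge> Tv pl P + gain j i v2 w2 - 4 * al - 2 * be"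
        using step_LB(1)[OF iv ji] v2 unfolding valid_def by blast
      show ?thesis using L1 L2 F1 False m al_be(1) by linarith
    qed
  qed
qed

lemma ff_claim:
  assumes "ff_out N V E u phi pl P p"
  shows "inv pl P \<longrightarrow> finite (set_pmf p) \<and> measure_pmf.expectation p (SW N E u F phi) \<ge> Tv pl P"
  using assms
proof (induction rule: ff_out.induct)
  case (ff_pair P pl Q)
  let ?X = "{(i, j). {i, j} \<in> P}"
  let ?f = "SW N E u F phi"
  show ?case
  proof
    assume iv: "inv pl P"
    obtain x y where edge: "{x, y} \<in> E" "x \<in> V - ran pl" "y \<in> V - ran pl" using ff_pair(2) by blast
    have XN: "?X \<subseteq> N \<times> N"
    proof
      fix z assume "z \<in> ?X"
      then obtain i j where z: "z = (i, j)" "{i, j} \<in> P" by blast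
      show "z \<in> N \<times> N" using step_facts[OF iv z(2)] z(1) by blast
    qed
    have fX: "finite ?X" using finite_subset[OF XN] finN by blast
    obtain s where sP: "s \<in> P" using ff_pair(1) by blast
    hence "s \<in> friend_pairs F" using iv unfolding inv_def by blast
    then obtain a b where "s = {a, b}" unfolding fp_mem by blast
    hence "(a, b) \<in> ?X" using sP by blast
    hence neX: "?X \<noteq> {}" by blast
    have each: "\<forall>z\<in>?X. finite (set_pmf (Q z)) \<and> (\<exists>v w. valid pl (fst z) (snd z) v w \<and>
        measure_pmf.expectation (Q z) ?f \<ge> Tv (pl(fst z \<mapsto> v, snd z \<mapsto> w)) (P - {{fst z, snd z}}))"
    proof
      fix z assume "z \<in> ?X"
      then obtain i j where z: "z = (i, j)" "{i, j} \<in> P" by blast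
      obtain v w where vw: "v \<in> V - ran pl"
        "\<forall>v'\<in>V - ran pl. first_val u E phi i j v' (V - ran pl) \<le> first_val u E phi i j v (V - ran pl)"
        "w \<in> best_resp u E phi j v (V - ran pl - {v})"
        and ih: "inv (pl(i \<mapsto> v, j \<mapsto> w)) (P - {{i, j}}) \<longrightarrow> finite (set_pmf (Q (i, j))) \<and>
           measure_pmf.expectation (Q (i, j)) ?f \<ge> Tv (pl(i \<mapsto> v, j \<mapsto> w)) (P - {{i, j}})"
        using ff_pair(3) z(2) by blast
      have "inv (pl(i \<mapsto> v, j \<mapsto> w)) (P - {{i, j}})" by (rule inv_step[OF iv z(2)])
      hence "finite (set_pmf (Q (i, j)))" "measure_pmf.expectation (Q (i, j)) ?f \<ge> Tv (pl(i \<mapsto> v, j \<mapsto> w)) (P - {{i, j}})"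
        using ih by auto
      moreover have "valid pl i j v w" using vw unfolding valid_def by blast
      ultimately show "finite (set_pmf (Q z)) \<and> (\<exists>v w. valid pl (fst z) (snd z) v w \<and>
        measure_pmf.expectation (Q z) ?f \<ge> Tv (pl(fst z \<mapsto> v, snd z \<mapsto> w)) (P - {{fst z, snd z}}))"
        using z(1) by auto
    qed
    have pw: "\<forall>z\<in>?X. measure_pmf.expectation (Q z) ?f + measure_pmf.expectation (Q (prod.swap z)) ?f \<ge> 2 * Tv pl P"
    proof
      fix z assume zX: "z \<in> ?X"
      then obtain i j where z: "z = (i, j)" "{i, j} \<in> P" by blast
      have ji: "{j, i} \<in> P" using z(2) by (simp add: insert_commute)
      hence jX: "(j, i) \<in> ?X" by blast
      obtain v1 w1 where a1: "valid pl i j v1 w1"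
        "measure_pmf.expectation (Q (i, j)) ?f \<ge> Tv (pl(i \<mapsto> v1, j \<mapsto> w1)) (P - {{i, j}})"
        using each zX z(1) by fastforce
      obtain v2 w2 where a2: "valid pl j i v2 w2"
        "measure_pmf.expectation (Q (j, i)) ?f \<ge> Tv (pl(j \<mapsto> v2, i \<mapsto> w2)) (P - {{j, i}})"
        using each jX by fastforce
      have "Tv (pl(i \<mapsto> v1, j \<mapsto> w1)) (P - {{i, j}}) + Tv (pl(j \<mapsto> v2, i \<mapsto> w2)) (P - {{j, i}}) \<ge> 2 * Tv pl P"
        by (rule pair_ineq[OF iv z(2) edge a1(1) a2(1)])
      thus "measure_pmf.expectation (Q z) ?f + measure_pmf.expectation (Q (prod.swap z)) ?f \<ge> 2 * Tv pl P"
        using a1(2) a2(2) z(1) by simp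
    qed
    have bij: "bij_betw prod.swap ?X ?X"
      by (rule bij_betwI[where g = prod.swap]) (auto simp: insert_commute)
    have re: "(\<Sum>z\<in>?X. measure_pmf.expectation (Q (prod.swap z)) ?f) = (\<Sum>z\<in>?X. measure_pmf.expectation (Q z) ?f)"
      using sum.reindex_bij_betw[OF bij, of "\<lambda>z. measure_pmf.expectation (Q z) ?f"] by simp
    have "(\<Sum>z\<in>?X. 2 * Tv pl P) \<le> (\<Sum>z\<in>?X. measure_pmf.expectation (Q z) ?f + measure_pmf.expectation (Q (prod.swap z)) ?f)"
      using pw by (intro sum_mono) auto
    also have "\<dots> = 2 * (\<Sum>z\<in>?X. measure_pmf.expectation (Q z) ?f)"
      using re by (simp add: sum.distrib)
    finally have sm: "(\<Sum>z\<in>?X. measure_pmf.expectation (Q z) ?f) \<ge> real (card ?X) * Tv pl P" by simp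
    show "finite (set_pmf (pmf_of_set ?X \<bind> Q)) \<and> measure_pmf.expectation (pmf_of_set ?X \<bind> Q) ?f \<ge> Tv pl P"
      by (rule avg_bind2[OF fX neX _ sm]) (use each in blast)
  qed
next
  case (ff_rsd P pl p)
  show ?case
  proof
    assume iv: "inv pl P"
    have dN: "dom pl \<subseteq> N" using iv unfolding inv_def by blast
    have K0: "Kv pl P = 0"
    proof (cases "P = {}")
      case True thus ?thesis unfolding Kv_def by simp
    next
      case False
      hence "\<not> (\<exists>x y. {x, y} \<in> E \<and> x \<in> V - ran pl \<and> y \<in> V - ran pl)" using ff_rsd(1) by blast
      hence "nu (V - ran pl) = 0" by (rule nu_zero)
      thus ?thesis unfolding Kv_def by simp
    qed
    show "finite (set_pmf p) \<and> measure_pmf.expectation p (SW N E u F phi) \<ge> Tv pl P"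
      using rsd_claim[OF ff_rsd(2)] dN K0 unfolding Tv_def by simp
  qed
qed

lemma final_bound: "cc * SW N E u F phi Ao \<le> Tv Map.empty (friend_pairs F)"
proof -
  let ?Fa = "{(i, j) \<in> F. {Ao i, Ao j} \<in> E}"
  let ?h = "\<lambda>(i, j). {Ao i, Ao j}"
  have injA: "inj_on Ao N" using Aobij bij_betw_imp_inj_on by blast
  have fFa: "finite ?Fa" by (rule finite_subset[OF _ finF]) auto
  have fib: "\<forall>e\<in>?h ` ?Fa. card {z \<in> ?Fa. ?h z = e} \<le> 2"
  proof
    fix e assume "e \<in> ?h ` ?Fa"
    then obtain z0 where z0: "z0 \<in> ?Fa" "e = ?h z0" by blast
    obtain i j where ijz: "z0 = (i, j)" by force
    have ij1: "(i, j) \<in> F" using z0(1) ijz by simp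
    have ij2: "e = {Ao i, Ao j}" using z0(2) ijz by simp
    have ijN: "i \<in> N" "j \<in> N" using ij1 FN by auto
    have "{z \<in> ?Fa. ?h z = e} \<subseteq> {(i, j), (j, i)}"
    proof
      fix z assume z: "z \<in> {z \<in> ?Fa. ?h z = e}"
      obtain a b where abz: "z = (a, b)" by force
      have zF: "z \<in> ?Fa" and he: "?h z = e" using z by blast+
      have ab2: "(a, b) \<in> F" using zF abz by simp
      have ab3: "{Ao a, Ao b} = {Ao i, Ao j}" using he abz ij2 by simp
      have abN: "a \<in> N" "b \<in> N" using ab2 FN by auto
      have im: "Ao ` {a, b} = Ao ` {i, j}" by (simp only: image_insert image_empty ab3)
      have sN: "{a, b} \<subseteq> N" "{i, j} \<subseteq> N" using abN ijN by auto
      have "(Ao ` {a, b} = Ao ` {i, j}) = ({a, b} = {i, j})" by (rule inj_on_image_eq_iff[OF injA sN])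
      hence "{a, b} = {i, j}" using im by blast
      hence "(a = i \<and> b = j) \<or> (a = j \<and> b = i)" by (simp add: doubleton_eq_iff)
      thus "z \<in> {(i, j), (j, i)}" using abz by blast
    qed
    hence "card {z \<in> ?Fa. ?h z = e} \<le> card {(i, j), (j, i)}" by (rule card_mono[rotated]) simp
    also have "\<dots> \<le> 2" by (rule card_insert_le_m1) simp_all
    finally show "card {z \<in> ?Fa. ?h z = e} \<le> 2" .
  qed
  have eqU: "?Fa = (\<Union>e\<in>?h ` ?Fa. {z \<in> ?Fa. ?h z = e})" by blast
  have "card ?Fa = card (\<Union>e\<in>?h ` ?Fa. {z \<in> ?Fa. ?h z = e})" using eqU by (rule arg_cong)
  also have "\<dots> \<le> (\<Sum>e\<in>?h ` ?Fa. card {z \<in> ?Fa. ?h z = e})"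
    by (rule card_UN_le[OF finite_imageI[OF fFa]])
  also have "\<dots> \<le> (\<Sum>e\<in>?h ` ?Fa. 2)" using fib by (intro sum_mono) auto
  finally have c1: "card ?Fa \<le> 2 * card (?h ` ?Fa)" by simp
  have im: "(\<lambda>s. Ao ` s) ` ((\<lambda>(i, j). {i, j}) ` ?Fa) = ?h ` ?Fa"
    unfolding image_image by (rule image_cong) auto
  have sub: "(\<lambda>(i, j). {i, j}) ` ?Fa \<subseteq> friend_pairs F" unfolding friend_pairs_def by auto
  have "card (?h ` ?Fa) \<le> card ((\<lambda>(i, j). {i, j}) ` ?Fa)"
    unfolding im[symmetric] by (rule card_image_le) (use fFa in simp)
  also have "\<dots> \<le> card (friend_pairs F)" by (rule card_mono[OF fin_fp sub])
  finally have c2: "card (?h ` ?Fa) \<le> card (friend_pairs F)" .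
  have "?h ` ?Fa \<in> matchings V"
    unfolding matchings_def
  proof (intro CollectI conjI ballI impI)
    show "?h ` ?Fa \<subseteq> E" by auto
  next
    fix e assume "e \<in> ?h ` ?Fa"
    then obtain i j where "(i, j) \<in> F" "e = {Ao i, Ao j}" by auto
    moreover have "Ao ` N \<subseteq> V" using Aobij bij_betw_imp_surj_on by blast
    ultimately show "e \<subseteq> V" using FN by auto
  next
    fix e1 e2 assume e1: "e1 \<in> ?h ` ?Fa" and e2: "e2 \<in> ?h ` ?Fa" and ne: "e1 \<noteq> e2"
    obtain a b where ab: "(a, b) \<in> F" "e1 = {Ao a, Ao b}" using e1 by auto
    obtain c d where cd: "(c, d) \<in> F" "e2 = {Ao c, Ao d}" using e2 by auto
    have N4: "a \<in> N" "b \<in> N" "c \<in> N" "d \<in> N" using ab cd FN by auto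
    have fp1: "{a, b} \<in> friend_pairs F" "{c, d} \<in> friend_pairs F" unfolding fp_mem using ab cd by auto
    show "e1 \<inter> e2 = {}"
    proof (rule ccontr)
      assume "e1 \<inter> e2 \<noteq> {}"
      then obtain z where z: "z \<in> e1" "z \<in> e2" by blast
      obtain x1 where x1: "x1 \<in> {a, b}" "z = Ao x1" using z(1) ab by auto
      obtain x2 where x2: "x2 \<in> {c, d}" "z = Ao x2" using z(2) cd by auto
      have "x1 = x2" using injA x1 x2 N4 unfolding inj_on_def by auto
      hence "{a, b} = {c, d}" using fp_disj[OF fp1] x1 x2 by blast
      moreover have "e1 = Ao ` {a, b}" "e2 = Ao ` {c, d}" using ab cd by auto
      ultimately have "e1 = e2" by simp
      thus False using ne by simp
    qed
  qed
  hence c3: "card (?h ` ?Fa) \<le> nu V" by (rule nu_ge)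
  have "Kv Map.empty (friend_pairs F) = min (card (friend_pairs F)) (nu V)" unfolding Kv_def by simp
  hence "card (?h ` ?Fa) \<le> Kv Map.empty (friend_pairs F)" using c2 c3 by simp
  hence K: "card ?Fa \<le> 2 * Kv Map.empty (friend_pairs F)" using c1 by linarith
  have U: "Uset Map.empty = {a \<in> N. u a (Ao a)}" unfolding Uset_def by simp
  have G0: "Gv Map.empty = 0" unfolding Gv_def Gs_def Gc_def by simp
  have "N \<inter> {x. u x (Ao x)} = {a \<in> N. u a (Ao a)}" by auto
  hence "(\<Sum>i\<in>N. of_bool (u i (Ao i)) :: real) = real (card {a \<in> N. u a (Ao a)})"
    using finN by simp
  hence sw: "SW N E u F phi Ao = real (card {a \<in> N. u a (Ao a)}) + phi * card ?Fa"
    unfolding SW_eq by simp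
  have "cc * phi * card ?Fa \<le> cc * phi * (2 * Kv Map.empty (friend_pairs F))"
    using K phi0 cc_eq by (intro mult_left_mono) (auto simp: cc_def)
  thus ?thesis unfolding Tv_def G0 U sw al_def be_def by (simp add: algebra_simps)
qed

lemma exists_max: "finite S \<Longrightarrow> S \<noteq> {} \<Longrightarrow> \<exists>x\<in>S. \<forall>y\<in>S. f y \<le> (f x :: real)"
proof -
  assume a: "finite S" "S \<noteq> {}"
  have fi: "finite (f ` S)" using a(1) by (rule finite_imageI)
  have "Max (f ` S) \<in> f ` S" using a by (intro Max_in) auto
  then obtain x where x: "x \<in> S" "f x = Max (f ` S)" by auto
  have "\<forall>y\<in>S. f y \<le> Max (f ` S)"
  proof
    fix y assume "y \<in> S"
    hence "f y \<in> f ` S" by (rule imageI)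
    thus "f y \<le> Max (f ` S)" using fi by (rule Max_ge[rotated])
  qed
  thus ?thesis using x by metis
qed

lemma ext_bij:
  assumes "dom pl \<subseteq> N" "ran pl \<subseteq> V" "inj_on pl (dom pl)"
  shows "\<exists>A. bij_betw A N V \<and> (\<forall>i\<in>dom pl. pl i = Some (A i))"
proof -
  let ?t = "\<lambda>a. the (pl a)"
  have b1: "bij_betw ?t (dom pl) (ran pl)"
  proof (rule bij_betw_imageI)
    show "inj_on ?t (dom pl)"
    proof (rule inj_onI)
      fix a b assume ab: "a \<in> dom pl" "b \<in> dom pl" "the (pl a) = the (pl b)"
      have "pl a = pl b" using ab(1,2,3) by (auto simp: domIff)
      thus "a = b" using inj_onD[OF assms(3) _ ab(1,2)] by blast
    qed
    show "?t ` dom pl = ran pl"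
    proof
      show "?t ` dom pl \<subseteq> ran pl"
      proof
        fix y assume "y \<in> ?t ` dom pl"
        then obtain a where a: "a \<in> dom pl" "y = the (pl a)" by blast
        hence "pl a = Some y" by (auto simp: domIff)
        thus "y \<in> ran pl" by (rule ranI)
      qed
      show "ran pl \<subseteq> ?t ` dom pl"
      proof
        fix y assume "y \<in> ran pl"
        then obtain a where a: "pl a = Some y" by (auto simp: ran_def)
        hence "a \<in> dom pl" "y = the (pl a)" by auto
        thus "y \<in> ?t ` dom pl" by blast
      qed
    qed
  qed
  have fd: "finite (dom pl)" using assms(1) finN by (rule finite_subset)
  have fr: "finite (ran pl)" using assms(2) finV by (rule finite_subset)
  have cdr: "card (dom pl) = card (ran pl)" using b1 by (rule bij_betw_same_card)
  have "card (N - dom pl) = card N - card (dom pl)" by (rule card_Diff_subset[OF fd assms(1)])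
  moreover have "card (V - ran pl) = card V - card (ran pl)" by (rule card_Diff_subset[OF fr assms(2)])
  ultimately have "card (N - dom pl) = card (V - ran pl)" using cdr cardNV by simp
  then obtain g where g: "bij_betw g (N - dom pl) (V - ran pl)"
    using finite_same_card_bij[of "N - dom pl" "V - ran pl"] finN finV by blast
  let ?A = "\<lambda>a. if a \<in> dom pl then the (pl a) else g a"
  have "bij_betw ?A (dom pl) (ran pl)" using b1 by (rule bij_betw_cong[THEN iffD1, rotated]) simp
  moreover have "bij_betw ?A (N - dom pl) (V - ran pl)" using g by (rule bij_betw_cong[THEN iffD1, rotated]) simp
  ultimately have "bij_betw ?A (dom pl \<union> (N - dom pl)) (ran pl \<union> (V - ran pl))"
    by (rule bij_betw_combine) blast
  moreover have "dom pl \<union> (N - dom pl) = N" "ran pl \<union> (V - ran pl) = V" using assms by auto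
  ultimately have "bij_betw ?A N V" by simp
  moreover have "\<forall>i\<in>dom pl. pl i = Some (?A i)" by (auto simp: domIff)
  ultimately show ?thesis by blast
qed

definition pinv :: "('a \<rightharpoonup> 'v) \<Rightarrow> bool" where
  "pinv pl \<longleftrightarrow> dom pl \<subseteq> N \<and> ran pl \<subseteq> V \<and> inj_on pl (dom pl)"

lemma pinv_upd:
  assumes "pinv pl" "i \<in> N" "i \<notin> dom pl" "v \<in> V - ran pl"
  shows "pinv (pl(i \<mapsto> v))"
proof -
  have vr: "v \<notin> ran pl" using assms(4) by blast
  have inj0: "inj_on pl (dom pl)" using assms(1) unfolding pinv_def by blast
  have "inj_on (pl(i \<mapsto> v)) (dom (pl(i \<mapsto> v)))"
  proof (rule inj_onI)
    fix a b assume a: "a \<in> dom (pl(i \<mapsto> v))" "b \<in> dom (pl(i \<mapsto> v))" "(pl(i \<mapsto> v)) a = (pl(i \<mapsto> v)) b"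
    show "a = b"
    proof (cases "a = i")
      case True
      show ?thesis
      proof (rule ccontr)
        assume "a \<noteq> b"
        hence "b \<noteq> i" using True by simp
        hence "pl b = Some v" using a(3) True by simp
        hence "v \<in> ran pl" by (rule ranI)
        thus False using vr by simp
      qed
    next
      case False
      show ?thesis
      proof (cases "b = i")
        case True
        hence "pl a = Some v" using a(3) False by simp
        hence "v \<in> ran pl" by (rule ranI)
        thus ?thesis using vr by simp
      next
        case bF: False
        have "a \<in> dom pl" "b \<in> dom pl" using a(1,2) False bF by auto
        moreover have "pl a = pl b" using a(3) False bF by simp
        ultimately show ?thesis using inj0 by (auto dest: inj_onD)
      qed
    qed
  qed
  moreover have "ran (pl(i \<mapsto> v)) = insert v (ran pl)" using assms(3) by (simp add: domIff)
  moreover have "dom (pl(i \<mapsto> v)) = insert i (dom pl)" by simp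
  ultimately show ?thesis using assms(1,2,4) unfolding pinv_def by auto
qed

lemma rsd_ex: "pinv pl \<Longrightarrow> \<exists>p. rsd_out N V u pl p"
proof (induction "card (N - dom pl)" arbitrary: pl rule: less_induct)
  case less
  let ?X = "{i \<in> N - dom pl. \<exists>v\<in>V - ran pl. u i v}"
  show ?case
  proof (cases "?X = {}")
    case True
    obtain A where "bij_betw A N V" "\<forall>i\<in>dom pl. pl i = Some (A i)"
      using ext_bij less(2) unfolding pinv_def by blast
    thus ?thesis using rsd_out.rsd_stop[OF True] by blast
  next
    case False
    have "\<forall>i\<in>?X. \<exists>q. \<exists>v. v \<in> V - ran pl \<and> u i v \<and> rsd_out N V u (pl(i \<mapsto> v)) q"
    proof
      fix i assume i: "i \<in> ?X"
      then obtain v where v: "v \<in> V - ran pl" "u i v" by blast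
      have pi: "pinv (pl(i \<mapsto> v))" using pinv_upd[OF less(2) _ _ v(1)] i by blast
      have "card (N - dom (pl(i \<mapsto> v))) < card (N - dom pl)"
        using i finN by (intro psubset_card_mono) auto
      then obtain q where "rsd_out N V u (pl(i \<mapsto> v)) q" using less(1)[OF _ pi] by blast
      thus "\<exists>q. \<exists>v. v \<in> V - ran pl \<and> u i v \<and> rsd_out N V u (pl(i \<mapsto> v)) q" using v by blast
    qed
    hence "\<exists>Q. \<forall>i\<in>?X. \<exists>v. v \<in> V - ran pl \<and> u i v \<and> rsd_out N V u (pl(i \<mapsto> v)) (Q i)"
      by (rule bchoice)
    then obtain Q where Q: "\<forall>i\<in>?X. \<exists>v. v \<in> V - ran pl \<and> u i v \<and> rsd_out N V u (pl(i \<mapsto> v)) (Q i)"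
      by (elim exE)
    have "rsd_out N V u pl (bind_pmf (pmf_of_set ?X) Q)"
      by (rule rsd_out.rsd_pick[OF False]) (use Q in blast)
    thus ?thesis by blast
  qed
qed

lemma ff_ex: "pinv pl \<Longrightarrow> inv pl P \<Longrightarrow> \<exists>p. ff_out N V E u phi pl P p"
proof (induction "card P" arbitrary: pl P rule: less_induct)
  case less
  show ?case
  proof (cases "P \<noteq> {} \<and> (\<exists>x y. {x, y} \<in> E \<and> x \<in> V - ran pl \<and> y \<in> V - ran pl)")
    case False
    obtain p where "rsd_out N V u pl p" using rsd_ex less(2) by blast
    thus ?thesis using ff_out.ff_rsd[OF False] by blast
  next
    case True
    let ?X = "{(i, j). {i, j} \<in> P}"
    let ?S = "V - ran pl"
    define R where "R = (\<lambda>z q. \<exists>v w. v \<in> ?S \<and>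
           (\<forall>v'\<in>?S. first_val u E phi (fst z) (snd z) v' ?S \<le> first_val u E phi (fst z) (snd z) v ?S) \<and>
           w \<in> best_resp u E phi (snd z) v (?S - {v}) \<and>
           ff_out N V E u phi (pl(fst z \<mapsto> v, snd z \<mapsto> w)) (P - {{fst z, snd z}}) q)"
    obtain x y where edge: "{x, y} \<in> E" "x \<in> ?S" "y \<in> ?S" using True by blast
    have xy: "x \<noteq> y" using edge(1) E_noself by auto
    have fS: "finite ?S" using finV by simp
    have neS: "?S \<noteq> {}" using edge by blast
    have "\<forall>z\<in>?X. \<exists>q. R z q"
    proof
      fix z assume "z \<in> ?X"
      then obtain i j where z: "z = (i, j)" "{i, j} \<in> P" by blast
      note sf = step_facts[OF less(3) z(2)]
      obtain v where v: "v \<in> ?S" "\<forall>v'\<in>?S. first_val u E phi i j v' ?S \<le> first_val u E phi i j v ?S"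
        using exists_max[OF fS neS, of "\<lambda>v. first_val u E phi i j v ?S"] by blast
      have ne: "?S - {v} \<noteq> {}"
      proof
        assume "?S - {v} = {}"
        hence "x = v" "y = v" using edge by blast+
        thus False using xy by simp
      qed
      have fS2: "finite (?S - {v})" using fS by simp
      obtain w where w: "w \<in> ?S - {v}" "\<forall>w'\<in>?S - {v}. second_val u E phi j v w' \<le> second_val u E phi j v w"
        using exists_max[OF fS2 ne, of "second_val u E phi j v"] by blast
      have wb: "w \<in> best_resp u E phi j v (?S - {v})" unfolding best_resp_def using w by blast
      have p1: "pinv (pl(i \<mapsto> v))" by (rule pinv_upd[OF less(2) sf(6) sf(1) v(1)])
      have jd: "j \<notin> dom (pl(i \<mapsto> v))" using sf(2,3) by simp
      have "ran (pl(i \<mapsto> v)) = insert v (ran pl)" using sf(1) by (simp add: domIff)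
      hence w2: "w \<in> V - ran (pl(i \<mapsto> v))" using w(1) by blast
      have p2: "pinv (pl(i \<mapsto> v, j \<mapsto> w))" by (rule pinv_upd[OF p1 sf(7) jd w2])
      have i2: "inv (pl(i \<mapsto> v, j \<mapsto> w)) (P - {{i, j}})" by (rule inv_step[OF less(3) z(2)])
      have fP: "finite P" using less(3) unfolding inv_def by blast
      have "P - {{i, j}} \<subset> P" using z(2) by blast
      hence cP: "card (P - {{i, j}}) < card P" by (rule psubset_card_mono[OF fP])
      obtain q where q: "ff_out N V E u phi (pl(i \<mapsto> v, j \<mapsto> w)) (P - {{i, j}}) q"
        using less(1)[OF cP p2 i2] by blast
      have "R (i, j) q" unfolding R_def fst_conv snd_conv using v wb q by blast
      thus "\<exists>q. R z q" using z(1) by blast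
    qed
    hence "\<exists>Q. \<forall>z\<in>?X. R z (Q z)" by (rule bchoice)
    then obtain Q where Q: "\<forall>z\<in>?X. R z (Q z)" by (elim exE)
    have "ff_out N V E u phi pl P (bind_pmf (pmf_of_set ?X) Q)"
    proof (rule ff_out.ff_pair)
      show "P \<noteq> {}" using True by blast
      show "\<exists>x y. {x, y} \<in> E \<and> x \<in> ?S \<and> y \<in> ?S" using edge by blast
      show "\<forall>i j. {i, j} \<in> P \<longrightarrow>
        (\<exists>v w. v \<in> ?S \<and>
           (\<forall>v'\<in>?S. first_val u E phi i j v' ?S \<le> first_val u E phi i j v ?S) \<and>
           w \<in> best_resp u E phi j v (?S - {v}) \<and>
           ff_out N V E u phi (pl(i \<mapsto> v, j \<mapsto> w)) (P - {{i, j}}) (Q (i, j)))"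
      proof (intro allI impI)
        fix i j assume "{i, j} \<in> P"
        hence "(i, j) \<in> ?X" by blast
        hence "R (i, j) (Q (i, j))" using Q by blast
        thus "\<exists>v w. v \<in> ?S \<and>
           (\<forall>v'\<in>?S. first_val u E phi i j v' ?S \<le> first_val u E phi i j v ?S) \<and>
           w \<in> best_resp u E phi j v (?S - {v}) \<and>
           ff_out N V E u phi (pl(i \<mapsto> v, j \<mapsto> w)) (P - {{i, j}}) (Q (i, j))"
          unfolding R_def fst_conv snd_conv .
      qed
    qed
    thus ?thesis by blast
  qed
qed

end

lemma SW_restrict:
  assumes "F \<subseteq> N \<times> N"
  shows "SW N E u F phi A = SW N E u F phi (restrict A N)"
proof -
  have "\<And>i. i \<in> N \<Longrightarrow> utility u F E phi A i = utility u F E phi (restrict A N) i"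
  proof -
    fix i assume i: "i \<in> N"
    have "(\<Sum>j\<in>{j. (i, j) \<in> F}. phi * of_bool ({A i, A j} \<in> E)) =
          (\<Sum>j\<in>{j. (i, j) \<in> F}. phi * of_bool ({restrict A N i, restrict A N j} \<in> E))"
      using i assms by (intro sum.cong) auto
    thus "utility u F E phi A i = utility u F E phi (restrict A N) i"
      unfolding utility_def using i by simp
  qed
  thus ?thesis unfolding SW_def by (rule sum.cong[OF refl])
qed

lemma OPT_attained:
  assumes "finite N" "finite V" "card N = card V" "F \<subseteq> N \<times> N"
  shows "\<exists>A. bij_betw A N V \<and> SW N E u F phi A = OPT N V E u F phi"
proof -
  let ?B = "{A. bij_betw A N V}"
  obtain A0 where "bij_betw A0 N V" using finite_same_card_bij assms by blast
  hence ne: "SW N E u F phi ` ?B \<noteq> {}" by blast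
  have "SW N E u F phi ` ?B \<subseteq> SW N E u F phi ` (PiE N (\<lambda>_. V))"
  proof
    fix y assume "y \<in> SW N E u F phi ` ?B"
    then obtain A where A: "bij_betw A N V" "y = SW N E u F phi A" by blast
    have "restrict A N \<in> PiE N (\<lambda>_. V)" using A(1) bij_betwE by fastforce
    moreover have "y = SW N E u F phi (restrict A N)" using A(2) SW_restrict[OF assms(4)] by simp
    ultimately show "y \<in> SW N E u F phi ` (PiE N (\<lambda>_. V))" by blast
  qed
  moreover have "finite (SW N E u F phi ` (PiE N (\<lambda>_. V)))"
    using assms(1,2) by (intro finite_imageI finite_PiE) auto
  ultimately have fi: "finite (SW N E u F phi ` ?B)" by (rule finite_subset)
  have "OPT N V E u F phi \<in> SW N E u F phi ` ?B" unfolding OPT_def using fi ne by (rule Max_in)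
  thus ?thesis by auto
qed

theorem theoremA1:
  fixes N :: "'a set" and V :: "'v set" and E :: "'v set set"
    and u :: "'a \<Rightarrow> 'v \<Rightarrow> bool" and F :: "('a \<times> 'a) set" and \<phi> :: real
  assumes "finite N" and "finite V" and "card N = card V"
    and "E \<subseteq> {{x, y} | x y. x \<in> V \<and> y \<in> V \<and> x \<noteq> y}"
    and "F \<subseteq> N \<times> N" and "sym F" and "\<forall>i. (i, i) \<notin> F"
    and "\<forall>i j k. (i, j) \<in> F \<longrightarrow> (i, k) \<in> F \<longrightarrow> j = k"
    and "F \<noteq> {}"
    and "0 < \<phi>" and "\<phi> < 1"
  shows "(\<exists>p. ff_out N V E u \<phi> Map.empty (friend_pairs F) p) \<and>
         (\<forall>p. ff_out N V E u \<phi> Map.empty (friend_pairs F) p \<longrightarrow>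
            measure_pmf.expectation p (SW N E u F \<phi>) \<ge> \<phi> / (4 * \<phi> + 4) * OPT N V E u F \<phi>)"
proof -
  obtain Ao where Ao: "bij_betw Ao N V" "SW N E u F \<phi> Ao = OPT N V E u F \<phi>"
    using OPT_attained[OF assms(1-3,5)] by blast
  interpret I: inst N V E u F \<phi> Ao
    using assms Ao(1) by unfold_locales auto
  have pe: "I.pinv Map.empty" unfolding I.pinv_def by simp
  have ie: "I.inv Map.empty (friend_pairs F)" unfolding I.inv_def using I.fin_fp by simp
  show ?thesis
  proof
    show "\<exists>p. ff_out N V E u \<phi> Map.empty (friend_pairs F) p" by (rule I.ff_ex[OF pe ie])
    show "\<forall>p. ff_out N V E u \<phi> Map.empty (friend_pairs F) p \<longrightarrow>
            measure_pmf.expectation p (SW N E u F \<phi>) \<ge> \<phi> / (4 * \<phi> + 4) * OPT N V E u F \<phi>"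
    proof (intro allI impI)
      fix p assume "ff_out N V E u \<phi> Map.empty (friend_pairs F) p"
      hence "measure_pmf.expectation p (SW N E u F \<phi>) \<ge> I.Tv Map.empty (friend_pairs F)"
        using I.ff_claim ie by blast
      moreover have "I.cc * SW N E u F \<phi> Ao \<le> I.Tv Map.empty (friend_pairs F)" by (rule I.final_bound)
      ultimately show "measure_pmf.expectation p (SW N E u F \<phi>) \<ge> \<phi> / (4 * \<phi> + 4) * OPT N V E u F \<phi>"
        using Ao(2) unfolding I.cc_def by simp
    qed
  qed
qed

end
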